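(* Consider smoothed LocalMaxCut on a graph $G=(V,E)$ with $n=|V|$, $m=|E|$ and maximum degree $\Delta(G)$, where the edge weights $w_e$ are drawn independently from distributions with densities $f_e:[-1,1]\to[0,\phi]$. Then the expected maximum number of iterations of local search under the Flip neighbourhood (over all initial cuts and all improving sequences) is $O(2^{\Delta(G)}nm^2\phi)$.
   Context: LocalMaxCut: given a weighted undirected graph $G=(V,E)$ with weights $w_e$, a cut is a partition $(V_1,V_2)$ of $V$ with weight $\sum_{uv\in E,\,u\in V_1,\,v\in V_2}w_{uv}$; the Flip neighbours of a cut are the cuts obtained by moving a single vertex to the other block; a solution is a cut with no neighbour of strictly larger weight. Local search repeatedly moves to a strictly better neighbour. *)

theory Defs
  imports "HOL-Probability.Probability"
begin

text \<open>Graph: finite vertex set V :: nat set, edges E are 2-element subsets of V.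
  A cut (V1, V - V1) is represented by the block S = V1 \<subseteq> V.\<close>

definition cut_weight :: "nat set set \<Rightarrow> (nat set \<Rightarrow> real) \<Rightarrow> nat set \<Rightarrow> real" where
  "cut_weight E w S = (\<Sum>e\<in>E. if card (e \<inter> S) = 1 then w e else 0)"

definition flip_nb :: "nat set \<Rightarrow> nat set \<Rightarrow> nat set \<Rightarrow> bool" where
  "flip_nb V S S' \<longleftrightarrow> (\<exists>v\<in>V. S' = (S - {v}) \<union> ({v} - S))"

definition improving_seq :: "nat set \<Rightarrow> nat set set \<Rightarrow> (nat set \<Rightarrow> real) \<Rightarrow> nat set list \<Rightarrow> bool" where
  "improving_seq V E w xs \<longleftrightarrow> xs \<noteq> [] \<and> hd xs \<subseteq> V \<and>
     (\<forall>i. Suc i < length xs \<longrightarrow> flip_nb V (xs ! i) (xs ! Suc i) \<and>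
        cut_weight E w (xs ! i) < cut_weight E w (xs ! Suc i))"

definition max_flip_steps :: "nat set \<Rightarrow> nat set set \<Rightarrow> (nat set \<Rightarrow> real) \<Rightarrow> enat" where
  "max_flip_steps V E w = (SUP xs \<in> {xs. improving_seq V E w xs}. enat (length xs - 1))"

definition degree :: "nat set set \<Rightarrow> nat \<Rightarrow> nat" where
  "degree E v = card {e\<in>E. v \<in> e}"

definition max_degree :: "nat set \<Rightarrow> nat set set \<Rightarrow> nat" where
  "max_degree V E = (if V = {} then 0 else Max (degree E ` V))"

end

theory Submission
  imports Defs
begin

definition Ev :: "nat set set \<Rightarrow> nat \<Rightarrow> nat set set" where
  "Ev E v = {e\<in>E. v \<in> e}"

definition gsum :: "nat set set \<Rightarrow> nat \<Rightarrow> nat set set \<Rightarrow> (nat set \<Rightarrow> real) \<Rightarrow> real" where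
  "gsum E v T w = (\<Sum>e\<in>Ev E v. (if e \<in> T then 1 else -1) * w e)"

lemma card_pair_inter:
  assumes "a \<noteq> b"
  shows "card ({a,b} \<inter> S) = 1 \<longleftrightarrow> (a \<in> S) \<noteq> (b \<in> S)"
proof (cases "a \<in> S"; cases "b \<in> S")
  assume "a \<in> S" "b \<in> S" then have "{a,b} \<inter> S = {a,b}" by auto
  then show ?thesis using assms \<open>a\<in>S\<close> \<open>b\<in>S\<close> by simp
next
  assume "a \<in> S" "b \<notin> S" then have "{a,b} \<inter> S = {a}" by auto
  then show ?thesis using \<open>a\<in>S\<close> \<open>b\<notin>S\<close> by simp
next
  assume "a \<notin> S" "b \<in> S" then have "{a,b} \<inter> S = {b}" by auto
  then show ?thesis using \<open>a\<notin>S\<close> \<open>b\<in>S\<close> by simp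
next
  assume "a \<notin> S" "b \<notin> S" then have "{a,b} \<inter> S = {}" by auto
  then show ?thesis using \<open>a\<notin>S\<close> \<open>b\<notin>S\<close> by simp
qed

lemma flip_edge:
  assumes "card e = 2" "v \<in> e"
  shows "card (e \<inter> ((S - {v}) \<union> ({v} - S))) = 1 \<longleftrightarrow> \<not> card (e \<inter> S) = 1"
proof -
  obtain x y where e: "e = {x,y}" "x \<noteq> y" using assms(1) by (auto simp: card_2_iff)
  then obtain u where u: "e = {v,u}" "u \<noteq> v" using assms(2) by auto
  show ?thesis unfolding u(1) using u(2)
    by (subst card_pair_inter, simp)+ auto
qed

lemma flip_other:
  assumes "v \<notin> e"
  shows "e \<inter> ((S - {v}) \<union> ({v} - S)) = e \<inter> S"
  using assms by auto

lemma flip_gain: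
  assumes "finite E" "\<forall>e\<in>E. card e = 2"
  shows "cut_weight E w ((S - {v}) \<union> ({v} - S)) - cut_weight E w S
         = gsum E v {e\<in>Ev E v. card (e \<inter> S) \<noteq> 1} w"
proof -
  let ?S' = "(S - {v}) \<union> ({v} - S)"
  have E: "E = Ev E v \<union> (E - Ev E v)" "Ev E v \<inter> (E - Ev E v) = {}" by (auto simp: Ev_def)
  have fin: "finite (Ev E v)" "finite (E - Ev E v)" using assms(1) by (auto simp: Ev_def)
  have "cut_weight E w ?S' - cut_weight E w S =
     (\<Sum>e\<in>E. (if card (e \<inter> ?S') = 1 then w e else 0) - (if card (e \<inter> S) = 1 then w e else 0))"
    unfolding cut_weight_def by (simp add: sum_subtractf)
  also have "\<dots> = (\<Sum>e\<in>Ev E v. (if card (e \<inter> ?S') = 1 then w e else 0) - (if card (e \<inter> S) = 1 then w e else 0))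
      + (\<Sum>e\<in>E - Ev E v. (if card (e \<inter> ?S') = 1 then w e else 0) - (if card (e \<inter> S) = 1 then w e else 0))"
    by (subst E(1), subst sum.union_disjoint) (use fin E(2) in auto)
  also have "(\<Sum>e\<in>E - Ev E v. (if card (e \<inter> ?S') = 1 then w e else 0) - (if card (e \<inter> S) = 1 then w e else 0)) = 0"
    by (rule sum.neutral) (auto simp: Ev_def flip_other)
  also have "(\<Sum>e\<in>Ev E v. (if card (e \<inter> ?S') = 1 then w e else 0) - (if card (e \<inter> S) = 1 then w e else 0))
     = gsum E v {e\<in>Ev E v. card (e \<inter> S) \<noteq> 1} w"
    unfolding gsum_def
  proof (rule sum.cong[OF refl])
    fix e assume "e \<in> Ev E v"
    then have "card e = 2" "v \<in> e" using assms(2) by (auto simp: Ev_def)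
    then show "(if card (e \<inter> ?S') = 1 then w e else 0) - (if card (e \<inter> S) = 1 then w e else 0) =
       (if e \<in> {e \<in> Ev E v. card (e \<inter> S) \<noteq> 1} then 1 else - 1) * w e"
      using flip_edge[of e v S] \<open>e \<in> Ev E v\<close> by auto
  qed
  finally show ?thesis by simp
qed

lemma cut_weight_abs:
  assumes "finite E" "\<forall>e\<in>E. \<bar>w e\<bar> \<le> 1"
  shows "\<bar>cut_weight E w S\<bar> \<le> card E"
proof -
  have "\<bar>cut_weight E w S\<bar> \<le> (\<Sum>e\<in>E. \<bar>if card (e \<inter> S) = 1 then w e else 0\<bar>)"
    unfolding cut_weight_def by (rule sum_abs)
  also have "\<dots> \<le> (\<Sum>e\<in>E. 1)" by (rule sum_mono) (use assms in auto)
  finally show ?thesis by simp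
qed

lemma seq_incr:
  assumes "improving_seq V E w xs" "i < j" "j < length xs"
  shows "cut_weight E w (xs ! i) < cut_weight E w (xs ! j)"
  using assms(2,3)
proof (induction j)
  case 0 then show ?case by simp
next
  case (Suc j)
  have st: "cut_weight E w (xs ! j) < cut_weight E w (xs ! Suc j)"
    using assms(1) Suc.prems unfolding improving_seq_def by auto
  show ?case
  proof (cases "i = j")
    case True then show ?thesis using st by simp
  next
    case False then show ?thesis using Suc st by force
  qed
qed

lemma seq_outside:
  assumes "improving_seq V E w xs" "finite E" "\<forall>e\<in>E. card e = 2" "i < length xs"
  shows "xs ! i - \<Union>E = hd xs - \<Union>E"
  using assms(4)
proof (induction i)
  case 0 then show ?case using assms(1) by (simp add: improving_seq_def hd_conv_nth)
next
  case (Suc i)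
  from assms(1) Suc.prems have fl: "flip_nb V (xs ! i) (xs ! Suc i)"
    and lt: "cut_weight E w (xs ! i) < cut_weight E w (xs ! Suc i)"
    unfolding improving_seq_def by auto
  then obtain v where v: "v \<in> V" "xs ! Suc i = (xs ! i - {v}) \<union> ({v} - xs ! i)"
    unfolding flip_nb_def by auto
  have "v \<in> \<Union>E"
  proof (rule ccontr)
    assume "v \<notin> \<Union>E"
    then have "Ev E v = {}" by (auto simp: Ev_def)
    then have "cut_weight E w (xs ! Suc i) - cut_weight E w (xs ! i) = 0"
      using flip_gain[OF assms(2,3), of w "xs ! i" v] v(2) by (simp add: gsum_def)
    then show False using lt by simp
  qed
  then have "xs ! Suc i - \<Union>E = xs ! i - \<Union>E" using v(2) by auto
  then show ?case using Suc by simp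
qed

lemma seq_length:
  assumes "improving_seq V E w xs" "finite E" "\<forall>e\<in>E. card e = 2"
  shows "length xs \<le> 2 ^ (2 * card E)"
proof -
  let ?U = "\<Union>E"
  have finU: "finite ?U" using assms(2,3) by (metis card.infinite finite_Union zero_neq_numeral)
  have inj: "inj_on (\<lambda>i. xs ! i \<inter> ?U) {..<length xs}"
  proof (rule inj_onI)
    fix i j assume ij: "i \<in> {..<length xs}" "j \<in> {..<length xs}" "xs ! i \<inter> ?U = xs ! j \<inter> ?U"
    have "xs ! i = (xs ! i \<inter> ?U) \<union> (xs ! i - ?U)" by auto
    also have "\<dots> = (xs ! j \<inter> ?U) \<union> (xs ! j - ?U)"
      using ij seq_outside[OF assms] by simp
    also have "\<dots> = xs ! j" by auto
    finally have eq: "xs ! i = xs ! j" .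
    show "i = j"
    proof (rule ccontr)
      assume "i \<noteq> j"
      then have "i < j \<or> j < i" by auto
      then show False using seq_incr[OF assms(1)] ij eq by (metis lessThan_iff less_irrefl)
    qed
  qed
  have "length xs = card ((\<lambda>i. xs ! i \<inter> ?U) ` {..<length xs})"
    using card_image[OF inj] by simp
  also have "\<dots> \<le> card (Pow ?U)"
    by (rule card_mono) (use finU in auto)
  also have "\<dots> = 2 ^ card ?U" using finU by (simp add: card_Pow)
  also have "card ?U \<le> sum card E" by (rule card_Union_le_sum_card)
  then have "(2::nat) ^ card ?U \<le> 2 ^ (2 * card E)"
    using assms(3) by (intro power_increasing) auto
  finally show ?thesis .
qed

lemma seq_small_gain:
  assumes "improving_seq V E w xs" "finite E" "\<forall>e\<in>E. card e = 2" "\<forall>e\<in>E. \<bar>w e\<bar> \<le> 1"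
    and "length xs = Suc t" "t \<ge> 1"
  shows "\<exists>v\<in>V. \<exists>T\<in>Pow (Ev E v). 0 < gsum E v T w \<and> gsum E v T w \<le> 2 * real (card E) / real t"
proof -
  define W where "W i = cut_weight E w (xs ! i)" for i
  have pos: "W (Suc i) - W i > 0" if "i < t" for i
    using assms(1,5) that unfolding improving_seq_def W_def by auto
  have tel: "(\<Sum>i<t. W (Suc i) - W i) = W t - W 0" by (rule sum_lessThan_telescope)
  have "\<bar>W t\<bar> \<le> card E" "\<bar>W 0\<bar> \<le> card E" unfolding W_def using cut_weight_abs[OF assms(2,4)] by auto
  then have tot: "(\<Sum>i<t. W (Suc i) - W i) \<le> 2 * real (card E)" using tel by linarith
  have "\<exists>i<t. W (Suc i) - W i \<le> 2 * real (card E) / real t"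
  proof (rule ccontr)
    assume "\<not> ?thesis"
    then have "\<forall>i<t. W (Suc i) - W i > 2 * real (card E) / real t" by auto
    then have "(\<Sum>i<t. 2 * real (card E) / real t) < (\<Sum>i<t. W (Suc i) - W i)"
      using assms(6) by (intro sum_strict_mono) (auto simp: lessThan_empty_iff)
    then show False using tot assms(6) by simp
  qed
  then obtain i where i: "i < t" "W (Suc i) - W i \<le> 2 * real (card E) / real t" by auto
  from assms(1,5) i(1) have "flip_nb V (xs ! i) (xs ! Suc i)"
    unfolding improving_seq_def by auto
  then obtain v where v: "v \<in> V" "xs ! Suc i = (xs ! i - {v}) \<union> ({v} - xs ! i)"
    unfolding flip_nb_def by auto
  have "W (Suc i) - W i = gsum E v {e\<in>Ev E v. card (e \<inter> xs ! i) \<noteq> 1} w"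
    unfolding W_def v(2) by (rule flip_gain[OF assms(2,3)])
  then show ?thesis using v(1) i pos[OF i(1)] by (intro bexI[OF _ v(1)] bexI[of _ "{e\<in>Ev E v. card (e \<inter> xs ! i) \<noteq> 1}"]) auto
qed

definition Aset :: "nat set \<Rightarrow> nat set set \<Rightarrow> nat \<Rightarrow> (nat set \<Rightarrow> real) set" where
  "Aset V E j = {w. \<exists>v\<in>V. \<exists>T\<in>Pow (Ev E v). 0 < gsum E v T w \<and> gsum E v T w \<le> 2 * real (card E) / 2 ^ j}"

definition Gnat :: "nat set \<Rightarrow> nat set set \<Rightarrow> (nat set \<Rightarrow> real) \<Rightarrow> nat" where
  "Gnat V E w = (\<Sum>j<2 * card E. if w \<in> Aset V E j then 2 ^ (j + 1) else 0)"

lemma steps_le_Gnat: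
  assumes "finite E" "\<forall>e\<in>E. card e = 2" "\<forall>e\<in>E. \<bar>w e\<bar> \<le> 1"
  shows "max_flip_steps V E w \<le> enat (Gnat V E w)"
  unfolding max_flip_steps_def
proof (rule SUP_least)
  fix xs assume "xs \<in> {xs. improving_seq V E w xs}"
  then have imp: "improving_seq V E w xs" by simp
  define t where "t = length xs - 1"
  have lxs: "length xs = Suc t" using imp unfolding t_def improving_seq_def by (cases xs) auto
  show "enat (length xs - 1) \<le> enat (Gnat V E w)"
  proof (cases "t = 0")
    case True then show ?thesis using lxs by simp
  next
    case False
    then have t1: "t \<ge> 1" by simp
    obtain j where j: "2 ^ j \<le> t" "t < 2 ^ (j + 1)" using ex_power_ivl1[of 2 t] t1 by auto
    have "Suc t \<le> 2 ^ (2 * card E)" using seq_length[OF imp assms(1,2)] lxs by simp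
    then have "(2::nat) ^ j < 2 ^ (2 * card E)" using j(1) by linarith
    then have jlt: "j < 2 * card E" using power_less_imp_less_exp by fastforce
    obtain v T where vT: "v \<in> V" "T \<in> Pow (Ev E v)" "0 < gsum E v T w"
        "gsum E v T w \<le> 2 * real (card E) / real t"
      using seq_small_gain[OF imp assms lxs t1] by blast
    have "real ((2::nat) ^ j) \<le> real t" using j(1) by linarith
    then have "2 * real (card E) / real t \<le> 2 * real (card E) / 2 ^ j"
      using t1 by (intro divide_left_mono) (auto intro!: mult_pos_pos)
    then have "w \<in> Aset V E j" unfolding Aset_def using vT by fastforce
    then have "2 ^ (j + 1) \<le> Gnat V E w"
      unfolding Gnat_def
      using member_le_sum[of j "{..<2 * card E}" "\<lambda>j. if w \<in> Aset V E j then 2 ^ (j + 1) else (0::nat)"] jlt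
      by auto
    then show ?thesis using j(2) t_def by simp
  qed
qed


lemma comp_meas:
  fixes M :: "nat set \<Rightarrow> real measure"
  assumes "\<And>e. sets (M e) = sets borel" "e \<in> J"
  shows "(\<lambda>w. w e) \<in> borel_measurable (PiM J M)"
  using measurable_component_singleton[OF assms(2), of M] measurable_cong_sets[OF refl assms(1)] by blast

lemma lin_sum_meas:
  fixes M :: "nat set \<Rightarrow> real measure"
  assumes "\<And>e. sets (M e) = sets borel" "F \<subseteq> J"
  shows "(\<lambda>w. \<Sum>e\<in>F. c e * w e) \<in> borel_measurable (PiM J M)"
proof (rule borel_measurable_sum)
  fix e assume "e \<in> F"
  then have "(\<lambda>w. w e) \<in> borel_measurable (PiM J M)" using comp_meas[OF assms(1), of e J] assms(2) by auto
  then show "(\<lambda>w. c e * w e) \<in> borel_measurable (PiM J M)" by (intro borel_measurable_times borel_measurable_const)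
qed

lemma lin_set_meas:
  fixes M :: "nat set \<Rightarrow> real measure"
  assumes "\<And>e. sets (M e) = sets borel" "F \<subseteq> J"
  shows "{w\<in>space (PiM J M). 0 < (\<Sum>e\<in>F. c e * w e) \<and> (\<Sum>e\<in>F. c e * w e) \<le> \<epsilon>} \<in> sets (PiM J M)"
proof -
  have m: "(\<lambda>w. \<Sum>e\<in>F. c e * w e) \<in> borel_measurable (PiM J M)" by (rule lin_sum_meas[OF assms])
  have "{w\<in>space (PiM J M). 0 < (\<Sum>e\<in>F. c e * w e) \<and> (\<Sum>e\<in>F. c e * w e) \<le> \<epsilon>} =
     {w\<in>space (PiM J M). (\<lambda>_. 0) w < (\<Sum>e\<in>F. c e * w e)} \<inter> {w\<in>space (PiM J M). (\<Sum>e\<in>F. c e * w e) \<le> (\<lambda>_. \<epsilon>) w}"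
    by auto
  also have "\<dots> \<in> sets (PiM J M)"
    using borel_measurable_less[OF borel_measurable_const m] borel_measurable_le[OF m borel_measurable_const] by (intro sets.Int) auto
  finally show ?thesis .
qed

lemma lin_prob:
  fixes M :: "nat set \<Rightarrow> real measure"
  assumes PS: "\<And>e. prob_space (M e)" and I: "finite I" and e0: "e0 \<in> F" and F: "F \<subseteq> I" and sets: "\<And>e. sets (M e) = sets borel"
    and dens: "\<And>a b. a \<le> b \<Longrightarrow> emeasure (M e0) {a..b} \<le> ennreal (\<phi> * (b - a))"
    and eps: "0 \<le> \<epsilon>" and c: "c e0 = 1 \<or> c e0 = -1"
  shows "emeasure (PiM I M) {w\<in>space (PiM I M). 0 < (\<Sum>e\<in>F. c e * w e) \<and> (\<Sum>e\<in>F. c e * w e) \<le> \<epsilon>}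
     \<le> ennreal (\<phi> * \<epsilon>)"
proof -
  interpret Mi: prob_space "M e" for e by (rule PS)
  interpret product_prob_space M I by unfold_locales
  define B where "B = {w\<in>space (PiM I M). 0 < (\<Sum>e\<in>F. c e * w e) \<and> (\<Sum>e\<in>F. c e * w e) \<le> \<epsilon>}"
  define I' where "I' = I - {e0}"
  have II: "I = insert e0 I'" "e0 \<notin> I'" "finite I'" using e0 F I by (auto simp: I'_def)
  have finF: "finite F" using F I finite_subset by auto
  have Bs: "B \<in> sets (PiM I M)" unfolding B_def by (rule lin_set_meas[OF sets F])
  have sp: "space (M e) = UNIV" for e using sets_eq_imp_space_eq[OF sets[of e]] by simp
  have "emeasure (PiM I M) B = (\<integral>\<^sup>+ w. indicator B w \<partial>PiM (insert e0 I') M)"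
    using Bs II(1) by simp
  also have "\<dots> = (\<integral>\<^sup>+ x. (\<integral>\<^sup>+ y. indicator B (x(e0 := y)) \<partial>(M e0)) \<partial>(PiM I' M))"
    using Bs II by (intro product_nn_integral_insert) auto
  also have "\<dots> \<le> (\<integral>\<^sup>+ x. ennreal (\<phi> * \<epsilon>) \<partial>(PiM I' M))"
  proof (rule nn_integral_mono)
    fix x assume x: "x \<in> space (PiM I' M)"
    define r where "r = (\<Sum>e\<in>F - {e0}. c e * x e)"
    define K where "K = (if c e0 = 1 then {-r..\<epsilon>-r} else {r-\<epsilon>..r})"
    have Kb: "emeasure (M e0) K \<le> ennreal (\<phi> * \<epsilon>)"
      unfolding K_def using dens[of "-r" "\<epsilon>-r"] dens[of "r-\<epsilon>" r] eps by auto
    have Ks: "K \<in> sets (M e0)" unfolding K_def sets by auto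
    have ind: "indicator B (x(e0 := y)) \<le> (indicator K y :: ennreal)" for y
    proof -
      have "x(e0 := y) \<in> space (PiM I M)"
        using x II sp by (auto simp: space_PiM PiE_iff)
      moreover have "(\<Sum>e\<in>F. c e * (x(e0 := y)) e) = c e0 * y + r"
        unfolding r_def using finF e0 by (subst sum.remove[of F e0]) (auto intro!: sum.cong)
      ultimately have "x(e0 := y) \<in> B \<longleftrightarrow> 0 < c e0 * y + r \<and> c e0 * y + r \<le> \<epsilon>"
        unfolding B_def by simp
      moreover have "0 < c e0 * y + r \<and> c e0 * y + r \<le> \<epsilon> \<Longrightarrow> y \<in> K"
        unfolding K_def using c by auto
      ultimately show ?thesis by (auto simp: indicator_def)
    qed
    have "(\<integral>\<^sup>+ y. indicator B (x(e0 := y)) \<partial>(M e0)) \<le> (\<integral>\<^sup>+ y. indicator K y \<partial>(M e0))"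
      by (rule nn_integral_mono) (use ind in auto)
    also have "\<dots> = emeasure (M e0) K" using Ks by simp
    finally show "(\<integral>\<^sup>+ y. indicator B (x(e0 := y)) \<partial>(M e0)) \<le> ennreal (\<phi> * \<epsilon>)" using Kb by simp
  qed
  also have "\<dots> = ennreal (\<phi> * \<epsilon>)"
  proof -
    interpret P': prob_space "PiM I' M" by (rule prob_space_PiM) (rule prob_space)
    show ?thesis by (simp add: P'.emeasure_space_1)
  qed
  finally show ?thesis unfolding B_def .
qed


lemma density_facts:
  fixes g :: "real \<Rightarrow> real"
  assumes gm: "g \<in> borel_measurable borel" and g: "\<forall>x. 0 \<le> g x \<and> g x \<le> \<phi>"
    and g1: "(\<integral>\<^sup>+ x. ennreal (g x) \<partial>lborel) = 1"
  shows "prob_space (density lborel (\<lambda>x. ennreal (g x)))"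
    and "\<And>a b. a \<le> b \<Longrightarrow> emeasure (density lborel (\<lambda>x. ennreal (g x))) {a..b} \<le> ennreal (\<phi> * (b - a))"
    and "\<And>A. A \<in> sets borel \<Longrightarrow> emeasure (density lborel (\<lambda>x. ennreal (g x))) A = (\<integral>\<^sup>+ x. ennreal (g x) * indicator A x \<partial>lborel)"
proof -
  have gm': "(\<lambda>x. ennreal (g x)) \<in> borel_measurable lborel"
    using gm by (simp add: measurable_lborel1)
  show em: "\<And>A. A \<in> sets borel \<Longrightarrow> emeasure (density lborel (\<lambda>x. ennreal (g x))) A = (\<integral>\<^sup>+ x. ennreal (g x) * indicator A x \<partial>lborel)"
    using gm' by (intro emeasure_density) auto
  show "prob_space (density lborel (\<lambda>x. ennreal (g x)))"
    by (rule prob_spaceI) (simp add: em g1)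
  fix a b :: real assume ab: "a \<le> b"
  have "emeasure (density lborel (\<lambda>x. ennreal (g x))) {a..b} = (\<integral>\<^sup>+ x. ennreal (g x) * indicator {a..b} x \<partial>lborel)"
    by (rule em) simp
  also have "\<dots> \<le> (\<integral>\<^sup>+ x. ennreal \<phi> * indicator {a..b} x \<partial>lborel)"
    by (rule nn_integral_mono) (use g in \<open>auto simp: indicator_def intro: ennreal_leI\<close>)
  also have "\<dots> = ennreal \<phi> * ennreal (b - a)" using ab by (subst nn_integral_cmult_indicator) auto
  also have "\<dots> = ennreal (\<phi> * (b - a))"
  proof -
    have "0 \<le> \<phi>" using g by (meson order_trans)
    then show ?thesis using ab by (simp add: ennreal_mult)
  qed
  finally show "emeasure (density lborel (\<lambda>x. ennreal (g x))) {a..b} \<le> ennreal (\<phi> * (b - a))" .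
qed

lemma Aset_decomp:
  "Aset V E j \<inter> space (PiM E M) = (\<Union>v\<in>V. \<Union>T\<in>Pow (Ev E v).
     {w\<in>space (PiM E M). 0 < (\<Sum>e\<in>Ev E v. (\<lambda>e. if e \<in> T then 1 else -1) e * w e) \<and>
        (\<Sum>e\<in>Ev E v. (\<lambda>e. if e \<in> T then 1 else -1) e * w e) \<le> 2 * real (card E) / 2 ^ j})"
  unfolding Aset_def gsum_def by auto

lemma Aset_bound:
  fixes M :: "nat set \<Rightarrow> real measure"
  assumes PS: "\<And>e. prob_space (M e)" and sets: "\<And>e. sets (M e) = sets borel"
    and finE: "finite E" and finV: "finite V"
    and phi: "0 \<le> \<phi>" and dens: "\<And>e a b. e \<in> E \<Longrightarrow> a \<le> b \<Longrightarrow> emeasure (M e) {a..b} \<le> ennreal (\<phi> * (b - a))"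
  shows "Aset V E j \<inter> space (PiM E M) \<in> sets (PiM E M)"
    and "emeasure (PiM E M) (Aset V E j \<inter> space (PiM E M))
      \<le> ennreal (\<phi> * (2 * real (card E) / 2 ^ j) * (\<Sum>v\<in>V. 2 ^ card (Ev E v)))"
proof -
  define \<epsilon> where "\<epsilon> = 2 * real (card E) / 2 ^ j"
  have eps: "0 \<le> \<epsilon>" unfolding \<epsilon>_def by simp
  define B where "B v T = {w\<in>space (PiM E M). 0 < (\<Sum>e\<in>Ev E v. (\<lambda>e. if e \<in> T then 1 else -1) e * w e) \<and>
        (\<Sum>e\<in>Ev E v. (\<lambda>e. if e \<in> T then 1 else -1) e * w e) \<le> \<epsilon>}" for v T
  have EvE: "Ev E v \<subseteq> E" for v by (auto simp: Ev_def)
  have finEv: "finite (Ev E v)" for v using finE EvE finite_subset by blast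
  have Bs: "B v T \<in> sets (PiM E M)" for v T
    unfolding B_def by (rule lin_set_meas[OF sets EvE])
  have dec: "Aset V E j \<inter> space (PiM E M) = (\<Union>v\<in>V. \<Union>T\<in>Pow (Ev E v). B v T)"
    unfolding B_def \<epsilon>_def by (rule Aset_decomp)
  have Us: "(\<Union>T\<in>Pow (Ev E v). B v T) \<in> sets (PiM E M)" for v
    using Bs finEv by (intro sets.finite_UN) auto
  show "Aset V E j \<inter> space (PiM E M) \<in> sets (PiM E M)"
    unfolding dec using Us finV by (intro sets.finite_UN) (auto simp: finEv Bs)
  have Bb: "emeasure (PiM E M) (B v T) \<le> ennreal (\<phi> * \<epsilon>)" for v T
  proof (cases "Ev E v = {}")
    case True
    then have "B v T = {}" unfolding B_def by auto
    then show ?thesis by simp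
  next
    case False
    then obtain e0 where e0: "e0 \<in> Ev E v" by auto
    show ?thesis unfolding B_def
      by (rule lin_prob[OF PS finE e0 EvE sets dens eps]) (use e0 EvE in auto)
  qed
  have "emeasure (PiM E M) (Aset V E j \<inter> space (PiM E M)) \<le> (\<Sum>v\<in>V. emeasure (PiM E M) (\<Union>T\<in>Pow (Ev E v). B v T))"
    unfolding dec using Us finV by (intro emeasure_subadditive_finite) auto
  also have "\<dots> \<le> (\<Sum>v\<in>V. \<Sum>T\<in>Pow (Ev E v). emeasure (PiM E M) (B v T))"
    using Bs finEv by (intro sum_mono emeasure_subadditive_finite) auto
  also have "\<dots> \<le> (\<Sum>v\<in>V. \<Sum>T\<in>Pow (Ev E v). ennreal (\<phi> * \<epsilon>))"
    using Bb by (intro sum_mono) auto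
  also have "\<dots> = (\<Sum>v\<in>V. ennreal (\<phi> * \<epsilon> * 2 ^ card (Ev E v)))"
    using finEv phi eps by (intro sum.cong refl) (simp add: card_Pow ennreal_of_nat_eq_real_of_nat ennreal_mult[symmetric] mult.commute)
  also have "\<dots> = ennreal (\<Sum>v\<in>V. \<phi> * \<epsilon> * 2 ^ card (Ev E v))"
    using phi eps by (intro sum_ennreal) auto
  also have "\<dots> = ennreal (\<phi> * \<epsilon> * (\<Sum>v\<in>V. 2 ^ card (Ev E v)))"
    by (simp add: sum_distrib_left)
  finally show "emeasure (PiM E M) (Aset V E j \<inter> space (PiM E M))
      \<le> ennreal (\<phi> * (2 * real (card E) / 2 ^ j) * (\<Sum>v\<in>V. 2 ^ card (Ev E v)))"
    unfolding \<epsilon>_def .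
qed

theorem mainTheorem11:
  "\<exists>C>0. \<forall>(V::nat set) (E::nat set set) (f::nat set \<Rightarrow> real \<Rightarrow> real) (\<phi>::real).
     finite V \<longrightarrow> E \<subseteq> {e. e \<subseteq> V \<and> card e = 2} \<longrightarrow>
     (\<forall>e\<in>E. f e \<in> borel_measurable borel \<and> (\<forall>x. 0 \<le> f e x \<and> f e x \<le> \<phi>) \<and>
        (\<forall>x. x \<notin> {-1..1} \<longrightarrow> f e x = 0) \<and>
        (\<integral>\<^sup>+ x. ennreal (f e x) \<partial>lborel) = 1) \<longrightarrow>
     (\<integral>\<^sup>+ w. ennreal_of_enat (max_flip_steps V E w) \<partial>(PiM E (\<lambda>e. density lborel (\<lambda>x. ennreal (f e x)))))
       \<le> ennreal (C * 2 ^ max_degree V E * real (card V) * real (card E) ^ 2 * \<phi>)"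
proof (intro exI[of _ "8::real"] conjI allI impI)
  show "(0::real) < 8" by simp
  fix V :: "nat set" and E :: "nat set set" and f :: "nat set \<Rightarrow> real \<Rightarrow> real" and \<phi> :: real
  assume finV: "finite V" and Esub: "E \<subseteq> {e. e \<subseteq> V \<and> card e = 2}"
    and hf: "\<forall>e\<in>E. f e \<in> borel_measurable borel \<and> (\<forall>x. 0 \<le> f e x \<and> f e x \<le> \<phi>) \<and>
        (\<forall>x. x \<notin> {-1..1} \<longrightarrow> f e x = 0) \<and> (\<integral>\<^sup>+ x. ennreal (f e x) \<partial>lborel) = 1"
  have "E \<subseteq> Pow V" using Esub by auto
  then have finE: "finite E" using finV finite_subset by auto
  have card2: "\<forall>e\<in>E. card e = 2" using Esub by auto
  let ?P = "PiM E (\<lambda>e. density lborel (\<lambda>x. ennreal (f e x)))"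
  let ?R = "ennreal (8 * 2 ^ max_degree V E * real (card V) * real (card E) ^ 2 * \<phi>)"
  show "(\<integral>\<^sup>+ w. ennreal_of_enat (max_flip_steps V E w) \<partial>?P) \<le> ?R"
  proof (cases "E = {}")
    case True
    have "(\<integral>\<^sup>+ w. ennreal_of_enat (max_flip_steps V E w) \<partial>?P) \<le> (\<integral>\<^sup>+ w. 0 \<partial>?P)"
    proof (rule nn_integral_mono)
      fix w
      have "max_flip_steps V E w \<le> enat (Gnat V E w)" using steps_le_Gnat[of E w V] True by simp
      also have "Gnat V E w = 0" using True by (simp add: Gnat_def)
      finally have "max_flip_steps V E w \<le> 0" by (simp add: zero_enat_def)
      then show "ennreal_of_enat (max_flip_steps V E w) \<le> 0" by simp
    qed
    then show ?thesis by simp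
  next
    case False
    then obtain e1 where e1: "e1 \<in> E" by auto
    have phi: "0 \<le> \<phi>" using hf e1 by (meson order_trans)
    define M where "M e = (if e \<in> E then density lborel (\<lambda>x. ennreal (f e x)) else return borel 0)" for e
    have PS: "prob_space (M e)" for e
      using hf density_facts(1)[of "f e" \<phi>] by (auto simp: M_def prob_space_return)
    have sets: "sets (M e) = sets borel" for e by (simp add: M_def)
    have dens: "emeasure (M e) {a..b} \<le> ennreal (\<phi> * (b - a))" if "e \<in> E" "a \<le> b" for e a b
      using hf that density_facts(2)[of "f e" \<phi> a b] by (auto simp: M_def)
    have PM: "?P = PiM E M" by (rule PiM_cong) (auto simp: M_def)
    interpret Mi: prob_space "M e" for e by (rule PS)
    interpret PP: product_prob_space M E by unfold_locales
    have AE: "AE w in PiM E M. \<forall>e\<in>E. \<bar>w e\<bar> \<le> 1"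
    proof (rule AE_finite_allI[OF finE])
      fix e assume e: "e \<in> E"
      define N where "N = {w\<in>space (PiM E M). w e \<in> - {-1..1}}"
      have Ns: "N \<in> sets (PiM E M)"
      proof -
        have "N = (\<lambda>w. w e) -` (- {-1..1}) \<inter> space (PiM E M)" unfolding N_def by auto
        also have "\<dots> \<in> sets (PiM E M)"
          by (rule measurable_sets[OF comp_meas[OF sets e]]) auto
        finally show ?thesis .
      qed
      have "emeasure (PiM E M) N = emeasure (M e) (- {-1..1})"
        unfolding N_def by (rule PP.emeasure_PiM_Collect_single[OF e]) (simp add: sets)
      also have "\<dots> = (\<integral>\<^sup>+ x. ennreal (f e x) * indicator (- {-1..1}) x \<partial>lborel)"
        using hf e density_facts(3)[of "f e" \<phi> "- {-1..1}"] by (auto simp: M_def)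
      also have "(\<lambda>x. ennreal (f e x) * indicator (- {-1..1}) x) = (\<lambda>x. 0)"
        using hf e by (intro ext) (auto simp: indicator_def)
      finally have "N \<in> null_sets (PiM E M)" using Ns by (simp add: null_sets_def)
      then show "AE w in PiM E M. \<bar>w e\<bar> \<le> 1"
        by (rule AE_I') (auto simp: N_def)
    qed
    define m where "m = card E"
    define A where "A j = Aset V E j \<inter> space (PiM E M)" for j
    define S where "S = (\<Sum>v\<in>V. (2::real) ^ card (Ev E v))"
    have As: "A j \<in> sets (PiM E M)" for j
      unfolding A_def by (rule Aset_bound(1)[OF PS sets finE finV phi dens])
    have Ab: "emeasure (PiM E M) (A j) \<le> ennreal (\<phi> * (2 * real m / 2 ^ j) * S)" for j
      unfolding A_def S_def m_def by (rule Aset_bound(2)[OF PS sets finE finV phi dens])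
    define G where "G w = (\<Sum>j<2 * m. of_nat (2 ^ (j + 1)) * indicator (A j) w :: ennreal)" for w
    have pw: "ennreal_of_enat (max_flip_steps V E w) \<le> G w"
      if w: "w \<in> space (PiM E M)" "\<forall>e\<in>E. \<bar>w e\<bar> \<le> 1" for w
    proof -
      have "max_flip_steps V E w \<le> enat (Gnat V E w)" by (rule steps_le_Gnat[OF finE card2 w(2)])
      then have "ennreal_of_enat (max_flip_steps V E w) \<le> of_nat (Gnat V E w)"
        by (metis ennreal_of_enat_enat ennreal_of_enat_le_iff)
      also have "of_nat (Gnat V E w) = G w"
        unfolding Gnat_def G_def m_def of_nat_sum using w(1)
        by (intro sum.cong refl) (auto simp: A_def indicator_def)
      finally show ?thesis .
    qed
    have "(\<integral>\<^sup>+ w. ennreal_of_enat (max_flip_steps V E w) \<partial>?P) \<le> (\<integral>\<^sup>+ w. G w \<partial>PiM E M)"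
      unfolding PM
    proof (rule nn_integral_mono_AE)
      show "AE w in PiM E M. ennreal_of_enat (max_flip_steps V E w) \<le> G w"
        using AE by (rule AE_mp) (auto intro!: AE_I2 pw)
    qed
    also have "\<dots> = (\<Sum>j<2 * m. of_nat (2 ^ (j + 1)) * emeasure (PiM E M) (A j))"
      unfolding G_def using As
      by (subst nn_integral_sum) (auto intro!: sum.cong nn_integral_cmult_indicator)
    also have "\<dots> \<le> (\<Sum>j<2 * m. of_nat (2 ^ (j + 1)) * ennreal (\<phi> * (2 * real m / 2 ^ j) * S))"
      using Ab by (intro sum_mono mult_left_mono) auto
    also have "\<dots> = (\<Sum>j<2 * m. ennreal (4 * real m * \<phi> * S))"
    proof (rule sum.cong[OF refl])
      fix j
      have S0: "0 \<le> S" unfolding S_def by (rule sum_nonneg) simp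
      then have X0: "0 \<le> \<phi> * (2 * real m / 2 ^ j) * S" using phi by simp
      have "of_nat (2 ^ (j + 1)) * ennreal (\<phi> * (2 * real m / 2 ^ j) * S)
          = ennreal (real (2 ^ (j + 1)) * (\<phi> * (2 * real m / 2 ^ j) * S))"
        using X0 by (metis ennreal_of_nat_eq_real_of_nat ennreal_mult of_nat_0_le_iff)
      also have "real (2 ^ (j + 1)) * (\<phi> * (2 * real m / 2 ^ j) * S) = 4 * real m * \<phi> * S"
        by (simp add: field_simps)
      finally show "of_nat (2 ^ (j + 1)) * ennreal (\<phi> * (2 * real m / 2 ^ j) * S) = ennreal (4 * real m * \<phi> * S)" .
    qed
    also have "\<dots> = ennreal (real (2 * m) * (4 * real m * \<phi> * S))"
    proof -
      have S0: "0 \<le> S" unfolding S_def by (rule sum_nonneg) simp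
      then have "0 \<le> 4 * real m * \<phi> * S" using phi by simp
      then have "ennreal (real (2 * m) * (4 * real m * \<phi> * S)) = ennreal (real (2*m)) * ennreal (4 * real m * \<phi> * S)"
        by (intro ennreal_mult) auto
      then show ?thesis by (simp only: sum_constant ennreal_of_nat_eq_real_of_nat card_lessThan)
    qed
    also have "\<dots> \<le> ?R"
    proof (rule ennreal_leI)
      have "S \<le> (\<Sum>v\<in>V. (2::real) ^ max_degree V E)"
        unfolding S_def
      proof (rule sum_mono)
        fix v assume v: "v \<in> V"
        have "card (Ev E v) = degree E v" by (simp add: Ev_def degree_def)
        also have "\<dots> \<le> max_degree V E"
          unfolding max_degree_def using v finV by auto
        finally show "(2::real) ^ card (Ev E v) \<le> 2 ^ max_degree V E" by (intro power_increasing) auto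
      qed
      then have "S \<le> real (card V) * 2 ^ max_degree V E" by simp
      then have "real (2 * m) * (4 * real m * \<phi> * S) \<le> real (2 * m) * (4 * real m * \<phi> * (real (card V) * 2 ^ max_degree V E))"
        using phi by (intro mult_left_mono) auto
      then show "real (2 * m) * (4 * real m * \<phi> * S) \<le> 8 * 2 ^ max_degree V E * real (card V) * real (card E) ^ 2 * \<phi>"
        unfolding m_def by (simp add: power2_eq_square algebra_simps)
    qed
    finally show ?thesis .
  qed
qed

end
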